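(* For every finite simple graph $G$, $$\vartheta(G)\;=\;\alpha_{\mathcal S}(G)\;=\;\inf_A\ \min\Big\{W_A(x)\ \Big|\ x\in\big[\lambda_{\min}(A)^{-1},\lambda_{\max}(A)^{-1}\big]\Big\},$$ where in the rightmost expression $A$ ranges over all real symmetric weighted adjacency matrices of $G$.
   Context: $G$ is a finite simple graph (undirected, no loops) with vertex set $\{1,\dots,n\}$. A (real symmetric) weighted adjacency matrix of $G$ is a real symmetric $n\times n$ matrix $A$ with $A_{ij}=0$ whenever $i\neq j$ are non-adjacent and $A_{ii}=0$ for all $i$. $\boldsymbol 1$ is the all-ones vector, $J=\boldsymbol 1\boldsymbol 1^T$, $\langle\cdot,\cdot\rangle$ the standard inner product. $\vartheta(G)$ is the Lovász theta function, which may be taken as $\vartheta(G)=\inf_B\lambda_{\max}(B)$ over real symmetric $B$ with $B_{ij}=1$ whenever $i=j$ or $i,j$ are non-adjacent. Let $\mathcal S_n=\{\boldsymbol v\in\mathbb R^n: \langle \boldsymbol 1,\boldsymbol v\rangle=|\boldsymbol v|^2\}=\{\boldsymbol v: |\boldsymbol v-\tfrac12\boldsymbol 1|^2=n/4\}$. The spherical independence number is $\alpha_{\mathcal S}(G)=\inf_A\sup\{|\boldsymbol v|^2:\boldsymbol v\in\mathcal S_n,\ \langle \boldsymbol v,A\boldsymbol v\rangle=0\}$, with $A$ over real symmetric weighted adjacency matrices of $G$. For such $A$ with spectral decomposition $A=\sum_{\lambda\in\sigma(A)}\lambda P_\lambda$ ($P_\lambda$ the orthogonal projection onto the $\lambda$-eigenspace),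 the weighted walk-generating function is $W_A(x)=\langle\boldsymbol 1,(I-xA)^{-1}\boldsymbol 1\rangle=\sum_{\lambda\in\sigma(A)}\frac{\langle\boldsymbol 1,P_\lambda\boldsymbol 1\rangle}{1-\lambda x}$; terms with $\langle\boldsymbol 1,P_\lambda\boldsymbol 1\rangle=0$ are omitted, so that $W_A(\lambda^{-1})$ is defined in that case, and at an endpoint $x=\lambda^{-1}$ with $\langle\boldsymbol 1,P_\lambda\boldsymbol 1\rangle>0$ the value is $+\infty$. $\lambda_{\min}(A),\lambda_{\max}(A)$ are the smallest and largest eigenvalues of $A$ (strictly negative and positive when $A\ne0$); when $A=0$ the inner minimum is taken to equal $n$ (interpreting the interval as $(-\infty,+\infty)$). *)

theory Defs
  imports "HOL-Analysis.Analysis"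
begin

text \<open>Graphs on a finite vertex type 'n (vertex set of size n = CARD('n)),
  given by an adjacency relation E (assumed symmetric and irreflexive in the theorem).\<close>

definition ones :: "real ^ 'n" where
  "ones = (\<chi> i. 1)"

definition symmetric_mat :: "real ^'n ^'n \<Rightarrow> bool" where
  "symmetric_mat A \<longleftrightarrow> transpose A = A"

definition weighted_adj :: "('n::finite \<Rightarrow> 'n \<Rightarrow> bool) \<Rightarrow> real ^'n ^'n \<Rightarrow> bool" where
  "weighted_adj E A \<longleftrightarrow> symmetric_mat A \<and> (\<forall>i. A $ i $ i = 0) \<and>
     (\<forall>i j. i \<noteq> j \<and> \<not> E i j \<longrightarrow> A $ i $ j = 0)"

definition eigenvalues :: "real ^'n ^'n \<Rightarrow> real set" where
  "eigenvalues A = {c. \<exists>v. v \<noteq> 0 \<and> A *v v = c *\<^sub>R v}"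

definition eigenspace :: "real ^'n ^'n \<Rightarrow> real \<Rightarrow> (real ^'n) set" where
  "eigenspace A c = {v. A *v v = c *\<^sub>R v}"

definition lambda_max :: "real ^'n ^'n \<Rightarrow> real" where
  "lambda_max A = Max (eigenvalues A)"

definition lambda_min :: "real ^'n ^'n \<Rightarrow> real" where
  "lambda_min A = Min (eigenvalues A)"

definition orth_proj :: "(real ^'n) set \<Rightarrow> real ^'n \<Rightarrow> real ^'n" where
  "orth_proj S v = (THE p. p \<in> S \<and> (\<forall>w\<in>S. (v - p) \<bullet> w = 0))"

definition spec_weight :: "real ^'n ^'n \<Rightarrow> real \<Rightarrow> real" where
  "spec_weight A c = ones \<bullet> orth_proj (eigenspace A c) ones"

definition lovasz_theta :: "('n::finite \<Rightarrow> 'n \<Rightarrow> bool) \<Rightarrow> real" where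
  "lovasz_theta E = Inf {lambda_max B | B. symmetric_mat B \<and>
      (\<forall>i j. (i = j \<or> \<not> E i j) \<longrightarrow> B $ i $ j = 1)}"

definition sphere_S :: "(real ^'n) set" where
  "sphere_S = {v. ones \<bullet> v = (norm v)\<^sup>2}"

definition spherical_indep :: "('n::finite \<Rightarrow> 'n \<Rightarrow> bool) \<Rightarrow> real" where
  "spherical_indep E = Inf {Sup {(norm v)\<^sup>2 | v. v \<in> sphere_S \<and> v \<bullet> (A *v v) = 0} | A.
      weighted_adj E A}"

definition walk_gen :: "real ^'n ^'n \<Rightarrow> real \<Rightarrow> ereal" where
  "walk_gen A x =
     (if \<exists>c\<in>eigenvalues A. spec_weight A c > 0 \<and> c * x = 1 then \<infinity>
      else ereal (\<Sum>c\<in>{c\<in>eigenvalues A. spec_weight A c \<noteq> 0}.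
                     spec_weight A c / (1 - c * x)))"

definition inner_min :: "real ^'n ^'n \<Rightarrow> ereal" where
  "inner_min A =
     (if A = 0 then ereal (real CARD('n))
      else (INF x\<in>{1 / lambda_min A .. 1 / lambda_max A}. walk_gen A x))"

end

theory Submission
  imports Defs
begin


lemma sym_inner:
  assumes "symmetric_mat A"
  shows "(A *v u) \<bullet> y = u \<bullet> (A *v y)"
proof -
  have "A *v u = u v* A"
    using assms unfolding symmetric_mat_def by (metis transpose_matrix_vector)
  then show ?thesis by (simp add: dot_lmul_matrix)
qed

lemma mv_lin: "linear (\<lambda>x. (A::real^'n^'m) *v x)" by simp

lemma eigenspace_subspace: "subspace (eigenspace (A::real^'n^'n) c)"
  unfolding subspace_def eigenspace_def
  by (auto simp: matrix_vector_right_distrib matrix_vector_mult_scaleR algebra_simps)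

lemma orth_proj_ex:
  fixes S :: "(real^'n) set"
  assumes "subspace S"
  shows "orth_proj S v \<in> S \<and> (\<forall>w\<in>S. (v - orth_proj S v) \<bullet> w = 0)"
proof -
  obtain y z where y: "y \<in> span S" and z: "\<And>w. w \<in> span S \<Longrightarrow> orthogonal z w" and v: "v = y + z"
    using orthogonal_subspace_decomp_exists by blast
  have sS: "span S = S" using assms by (simp add: span_eq_iff)
  have P: "y \<in> S \<and> (\<forall>w\<in>S. (v - y) \<bullet> w = 0)"
    using y z v sS by (auto simp: orthogonal_def)
  have U: "p = y" if "p \<in> S \<and> (\<forall>w\<in>S. (v - p) \<bullet> w = 0)" for p
  proof -
    have d: "y - p \<in> S" using that P assms by (simp add: subspace_diff)
    have "(y - p) \<bullet> (y - p) = (v - p) \<bullet> (y - p) - (v - y) \<bullet> (y - p)"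
      by (simp add: algebra_simps inner_diff_left)
    also have "\<dots> = 0" using that P d by simp
    finally show ?thesis by simp
  qed
  have "orth_proj S v = y"
    unfolding orth_proj_def using P U by (rule the_equality)
  with P show ?thesis by simp
qed

lemma quad0:
  fixes q Q :: real
  assumes "\<And>t. 0 \<le> 2*t*q + t^2*Q"
  shows "q = 0"
proof (rule ccontr)
  assume "q \<noteq> 0"
  define s where "s = \<bar>Q\<bar> + 1"
  have sp: "s > 0" "Q < 2 * s" unfolding s_def by auto
  have "0 \<le> 2*(-q/s)*q + (-q/s)^2*Q" by (rule assms)
  then have "0 \<le> (2*(-q/s)*q + (-q/s)^2*Q) * s^2" by simp
  also have "\<dots> = q^2 * (Q - 2 * s)" using sp by (simp add: field_simps power2_eq_square)
  finally have "0 \<le> q^2 * (Q - 2 * s)" .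
  moreover have "q^2 > 0" using \<open>q \<noteq> 0\<close> by simp
  ultimately show False using sp by (simp add: mult_le_0_iff zero_le_mult_iff)
qed

lemma eig_orth:
  assumes "symmetric_mat A" "x \<in> eigenspace A c" "y \<in> eigenspace A d" "c \<noteq> d"
  shows "x \<bullet> y = 0"
proof -
  have "c * (x \<bullet> y) = (A *v x) \<bullet> y" using assms by (simp add: eigenspace_def)
  also have "\<dots> = x \<bullet> (A *v y)" using assms(1) by (rule sym_inner)
  also have "\<dots> = d * (x \<bullet> y)" using assms by (simp add: eigenspace_def)
  finally show ?thesis using assms(4) by simp
qed

lemma eig_finite:
  assumes "symmetric_mat (A::real^'n^'n)"
  shows "finite (eigenvalues A)"
proof -
  define f where "f c = (SOME v. v \<noteq> 0 \<and> A *v v = c *\<^sub>R v)" for c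
  have f: "f c \<noteq> 0 \<and> A *v f c = c *\<^sub>R f c" if "c \<in> eigenvalues A" for c
    unfolding f_def using that unfolding eigenvalues_def by (metis (mono_tags, lifting) mem_Collect_eq someI_ex)
  have inj: "inj_on f (eigenvalues A)"
  proof (rule inj_onI)
    fix c d assume "c \<in> eigenvalues A" "d \<in> eigenvalues A" "f c = f d"
    then have "c *\<^sub>R f c = d *\<^sub>R f c" "f c \<noteq> 0" using f by metis+
    then show "c = d" by (simp add: scaleR_cancel_right)
  qed
  have "pairwise orthogonal (f ` eigenvalues A)"
    unfolding pairwise_def orthogonal_def
  proof clarify
    fix c d assume cd: "c \<in> eigenvalues A" "d \<in> eigenvalues A" "f c \<noteq> f d"
    then have "c \<noteq> d" by auto
    then show "f c \<bullet> f d = 0"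
      using eig_orth[OF assms, of "f c" c "f d" d] f cd by (simp add: eigenspace_def)
  qed
  moreover have "0 \<notin> f ` eigenvalues A" using f by auto
  ultimately have "independent (f ` eigenvalues A)" by (rule pairwise_orthogonal_independent)
  then have "finite (f ` eigenvalues A)" by (rule finiteI_independent)
  then show ?thesis using inj by (rule finite_imageD)
qed

lemma exists_eigvec:
  fixes A :: "real^'n^'n" and W :: "(real^'n) set"
  assumes sym: "symmetric_mat A" and sub: "subspace W" and inv: "\<And>r. r \<in> W \<Longrightarrow> A *v r \<in> W"
    and nz: "u \<in> W" "u \<noteq> 0"
  shows "\<exists>e\<in>W. e \<noteq> 0 \<and> (\<exists>\<mu>. A *v e = \<mu> *\<^sub>R e)"
proof -
  define K where "K = W \<inter> sphere 0 1"
  have "compact K" unfolding K_def by (intro closed_Int_compact closed_subspace[OF sub] compact_sphere)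
  moreover have "K \<noteq> {}"
  proof -
    have "(1 / norm u) *\<^sub>R u \<in> K" using nz sub unfolding K_def by (simp add: subspace_scale)
    then show ?thesis by auto
  qed
  moreover have "continuous_on K (\<lambda>z. z \<bullet> (A *v z))"
    by (intro continuous_on_inner continuous_on_id linear_continuous_on matrix_vector_mul_bounded_linear)
  ultimately obtain u0 where u0: "u0 \<in> K" and mx: "\<And>z. z \<in> K \<Longrightarrow> z \<bullet> (A *v z) \<le> u0 \<bullet> (A *v u0)"
    using continuous_attains_sup[of K "\<lambda>z. z \<bullet> (A *v z)"] by auto
  define l where "l = u0 \<bullet> (A *v u0)"
  have u0W: "u0 \<in> W" and u01: "u0 \<bullet> u0 = 1" using u0 unfolding K_def by (auto simp: dot_square_norm)
  have le: "z \<bullet> (A *v z) \<le> l * (z \<bullet> z)" if "z \<in> W" for z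
  proof (cases "z = 0")
    case True then show ?thesis by simp
  next
    case False
    have "(1 / norm z) *\<^sub>R z \<in> K" using that False sub unfolding K_def by (simp add: subspace_scale)
    then have "((1 / norm z) *\<^sub>R z) \<bullet> (A *v ((1 / norm z) *\<^sub>R z)) \<le> l" using mx l_def by blast
    then have "(z \<bullet> (A *v z)) / (norm z)^2 \<le> l"
      by (simp add: matrix_vector_mult_scaleR power2_eq_square divide_inverse mult.commute mult.left_commute)
    then show ?thesis using False by (simp add: divide_le_eq dot_square_norm mult.commute)
  qed
  have q0: "l * (u0 \<bullet> w) - w \<bullet> (A *v u0) = 0" if "w \<in> W" for w
  proof (rule quad0)
    fix t :: real
    have "u0 + t *\<^sub>R w \<in> W" using u0W that sub by (simp add: subspace_add subspace_scale)
    then have L: "(u0 + t *\<^sub>R w) \<bullet> (A *v (u0 + t *\<^sub>R w)) \<le> l * ((u0 + t *\<^sub>R w) \<bullet> (u0 + t *\<^sub>R w))"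
      by (rule le)
    have sw: "u0 \<bullet> (A *v w) = w \<bullet> (A *v u0)"
      using sym_inner[OF sym, of w u0] by (simp add: inner_commute)
    have Aex: "A *v (u0 + t *\<^sub>R w) = A *v u0 + t *\<^sub>R (A *v w)"
      by (simp add: matrix_vector_right_distrib matrix_vector_mult_scaleR)
    have e1: "(u0 + t *\<^sub>R w) \<bullet> (A *v (u0 + t *\<^sub>R w)) = l + 2 * t * (w \<bullet> (A *v u0)) + t^2 * (w \<bullet> (A *v w))"
      unfolding Aex l_def using sw by (simp add: inner_add_left inner_add_right power2_eq_square algebra_simps)
    have e2: "(u0 + t *\<^sub>R w) \<bullet> (u0 + t *\<^sub>R w) = 1 + 2 * t * (u0 \<bullet> w) + t^2 * (w \<bullet> w)"
      using u01 by (simp add: inner_add_left inner_add_right power2_eq_square algebra_simps inner_commute)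
    have e3: "l * (1 + 2 * t * (u0 \<bullet> w) + t^2 * (w \<bullet> w)) = l + 2 * t * (l * (u0 \<bullet> w)) + t^2 * (l * (w \<bullet> w))"
      by (simp add: algebra_simps)
    show "0 \<le> 2 * t * (l * (u0 \<bullet> w) - w \<bullet> (A *v u0)) + t^2 * (l * (w \<bullet> w) - w \<bullet> (A *v w))"
    proof -
      have "0 \<le> 2 * t * (l * (u0 \<bullet> w)) - 2 * t * (w \<bullet> (A *v u0)) + (t^2 * (l * (w \<bullet> w)) - t^2 * (w \<bullet> (A *v w)))"
        using L unfolding e1 e2 e3 by linarith
      then show ?thesis by (simp only: right_diff_distrib)
    qed
  qed
  define r where "r = A *v u0 - l *\<^sub>R u0"
  have rW: "r \<in> W" unfolding r_def using inv[OF u0W] u0W sub by (simp add: subspace_diff subspace_scale)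
  have "r \<bullet> r = 0"
  proof -
    have "r \<bullet> r = r \<bullet> (A *v u0) - l * (r \<bullet> u0)"
      by (metis r_def inner_diff_right inner_scaleR_right)
    then show ?thesis using q0[OF rW] by (simp add: inner_commute)
  qed
  then have "A *v u0 = l *\<^sub>R u0" unfolding r_def by simp
  moreover have "u0 \<noteq> 0" using u01 by auto
  ultimately show ?thesis using u0W by blast
qed



definition Pr :: "real^'n^'n \<Rightarrow> real \<Rightarrow> real^'n \<Rightarrow> real^'n" where
  "Pr A c u = orth_proj (eigenspace A c) u"

lemma Pr_eig: "Pr A c u \<in> eigenspace A c"
  unfolding Pr_def using orth_proj_ex[OF eigenspace_subspace] by blast

lemma Pr_A: "A *v Pr A c u = c *\<^sub>R Pr A c u"
  using Pr_eig unfolding eigenspace_def by blast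

lemma Pr_perp: "e \<in> eigenspace A c \<Longrightarrow> (u - Pr A c u) \<bullet> e = 0"
  unfolding Pr_def using orth_proj_ex[OF eigenspace_subspace] by blast

lemma Pr_inner: "Pr A c u \<bullet> y = Pr A c u \<bullet> Pr A c y"
proof -
  have "(y - Pr A c y) \<bullet> Pr A c u = 0" by (rule Pr_perp[OF Pr_eig])
  then have "Pr A c u \<bullet> (y - Pr A c y) = 0" by (simp only: inner_commute)
  then show ?thesis by (simp add: inner_diff_right)
qed

lemma spectral:
  assumes sym: "symmetric_mat (A::real^'n^'n)"
  shows "u = (\<Sum>c\<in>eigenvalues A. Pr A c u)"
proof (rule ccontr)
  assume ne: "u \<noteq> (\<Sum>c\<in>eigenvalues A. Pr A c u)"
  define W where "W = {r. \<forall>c\<in>eigenvalues A. \<forall>e\<in>eigenspace A c. r \<bullet> e = 0}"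
  have sub: "subspace W" unfolding W_def subspace_def
    by (simp add: inner_add_left)
  have inv: "A *v r \<in> W" if "r \<in> W" for r
  proof -
    have "(A *v r) \<bullet> e = 0" if "c \<in> eigenvalues A" "e \<in> eigenspace A c" for c e
    proof -
      have "(A *v r) \<bullet> e = r \<bullet> (A *v e)" by (rule sym_inner[OF sym])
      also have "\<dots> = c * (r \<bullet> e)" using that by (simp add: eigenspace_def)
      also have "\<dots> = 0" using \<open>r \<in> W\<close> that unfolding W_def by simp
      finally show ?thesis .
    qed
    then show ?thesis unfolding W_def by blast
  qed
  define r0 where "r0 = u - (\<Sum>c\<in>eigenvalues A. Pr A c u)"
  have fin: "finite (eigenvalues A)" by (rule eig_finite[OF sym])
  have r0W: "r0 \<in> W" unfolding W_def
  proof (intro CollectI ballI)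
    fix d e assume d: "d \<in> eigenvalues A" and e: "e \<in> eigenspace A d"
    have z: "Pr A c u \<bullet> e = 0" if "c \<in> eigenvalues A - {d}" for c
      using eig_orth[OF sym Pr_eig e] that by auto
    have "(\<Sum>c\<in>eigenvalues A. Pr A c u) \<bullet> e = (\<Sum>c\<in>eigenvalues A. Pr A c u \<bullet> e)"
      by (simp add: inner_sum_left)
    also have "\<dots> = Pr A d u \<bullet> e + (\<Sum>c\<in>eigenvalues A - {d}. Pr A c u \<bullet> e)"
      using fin d by (simp add: sum.remove)
    also have "\<dots> = Pr A d u \<bullet> e" using z by simp
    finally have "(\<Sum>c\<in>eigenvalues A. Pr A c u) \<bullet> e = Pr A d u \<bullet> e" .
    then show "r0 \<bullet> e = 0" unfolding r0_def using Pr_perp[OF e, of u]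
      by (simp add: inner_diff_left)
  qed
  have "r0 \<noteq> 0" using ne unfolding r0_def by simp
  then obtain e \<mu> where eW: "e \<in> W" and enz: "e \<noteq> 0" and Ae: "A *v e = \<mu> *\<^sub>R e"
    using exists_eigvec[OF sym sub inv r0W] by blast
  have "\<mu> \<in> eigenvalues A" using enz Ae unfolding eigenvalues_def by blast
  moreover have "e \<in> eigenspace A \<mu>" using Ae unfolding eigenspace_def by simp
  ultimately have "e \<bullet> e = 0" using eW unfolding W_def by blast
  then show False using enz by simp
qed

lemma inner_decomp:
  assumes sym: "symmetric_mat (A::real^'n^'n)"
  shows "u \<bullet> y = (\<Sum>c\<in>eigenvalues A. Pr A c u \<bullet> Pr A c y)"
proof -
  have "u \<bullet> y = (\<Sum>c\<in>eigenvalues A. Pr A c u) \<bullet> y" using spectral[OF sym, of u] by simp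
  also have "\<dots> = (\<Sum>c\<in>eigenvalues A. Pr A c u \<bullet> y)" by (simp add: inner_sum_left)
  also have "\<dots> = (\<Sum>c\<in>eigenvalues A. Pr A c u \<bullet> Pr A c y)" by (rule sum.cong[OF refl]) (rule Pr_inner)
  finally show ?thesis .
qed

lemma A_decomp:
  assumes sym: "symmetric_mat (A::real^'n^'n)"
  shows "(A *v u) \<bullet> y = (\<Sum>c\<in>eigenvalues A. c * (Pr A c u \<bullet> Pr A c y))"
proof -
  have "A *v u = A *v (\<Sum>c\<in>eigenvalues A. Pr A c u)" using spectral[OF sym, of u] by simp
  also have "\<dots> = (\<Sum>c\<in>eigenvalues A. A *v Pr A c u)" using linear_sum[OF matrix_vector_mul_linear[of A]] by (simp add: o_def)
  also have "\<dots> = (\<Sum>c\<in>eigenvalues A. c *\<^sub>R Pr A c u)" by (simp add: Pr_A)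
  finally have "(A *v u) \<bullet> y = (\<Sum>c\<in>eigenvalues A. c *\<^sub>R Pr A c u) \<bullet> y" by simp
  also have "\<dots> = (\<Sum>c\<in>eigenvalues A. c * (Pr A c u \<bullet> y))" by (simp add: inner_sum_left)
  also have "\<dots> = (\<Sum>c\<in>eigenvalues A. c * (Pr A c u \<bullet> Pr A c y))" by (rule sum.cong[OF refl]) (metis Pr_inner)
  finally show ?thesis .
qed



lemma ones_nz: "(ones::real^'n) \<noteq> 0"
proof
  assume "(ones::real^'n) = 0"
  then have "(ones::real^'n) $ undefined = 0" by simp
  then show False by (simp add: ones_def)
qed

lemma eig_nonempty:
  assumes sym: "symmetric_mat (A::real^'n^'n)"
  shows "eigenvalues A \<noteq> {}"
  using spectral[OF sym, of ones] ones_nz by auto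

lemma lmax_in: "symmetric_mat A \<Longrightarrow> lambda_max A \<in> eigenvalues A"
  unfolding lambda_max_def using eig_finite eig_nonempty Max_in by blast

lemma lmin_in: "symmetric_mat A \<Longrightarrow> lambda_min A \<in> eigenvalues A"
  unfolding lambda_min_def using eig_finite eig_nonempty Min_in by blast

lemma le_lmax: "symmetric_mat A \<Longrightarrow> c \<in> eigenvalues A \<Longrightarrow> c \<le> lambda_max A"
  unfolding lambda_max_def by (simp add: eig_finite)

lemma ge_lmin: "symmetric_mat A \<Longrightarrow> c \<in> eigenvalues A \<Longrightarrow> lambda_min A \<le> c"
  unfolding lambda_min_def by (simp add: eig_finite)

lemma ray_max:
  assumes sym: "symmetric_mat (A::real^'n^'n)"
  shows "u \<bullet> (A *v u) \<le> lambda_max A * (u \<bullet> u)"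
proof -
  have "u \<bullet> (A *v u) = (A *v u) \<bullet> u" by (simp add: inner_commute)
  also have "\<dots> = (\<Sum>c\<in>eigenvalues A. c * (Pr A c u \<bullet> Pr A c u))" by (rule A_decomp[OF sym])
  also have "\<dots> \<le> (\<Sum>c\<in>eigenvalues A. lambda_max A * (Pr A c u \<bullet> Pr A c u))"
    by (rule sum_mono) (simp add: mult_right_mono le_lmax[OF sym])
  also have "\<dots> = lambda_max A * (u \<bullet> u)"
    by (simp add: sum_distrib_left inner_decomp[OF sym, of u u])
  finally show ?thesis .
qed

lemma ray_min:
  assumes sym: "symmetric_mat (A::real^'n^'n)"
  shows "lambda_min A * (u \<bullet> u) \<le> u \<bullet> (A *v u)"
proof -
  have "lambda_min A * (u \<bullet> u) = (\<Sum>c\<in>eigenvalues A. lambda_min A * (Pr A c u \<bullet> Pr A c u))"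
    by (simp add: sum_distrib_left inner_decomp[OF sym, of u u])
  also have "\<dots> \<le> (\<Sum>c\<in>eigenvalues A. c * (Pr A c u \<bullet> Pr A c u))"
    by (rule sum_mono) (simp add: mult_right_mono ge_lmin[OF sym])
  also have "\<dots> = (A *v u) \<bullet> u" by (rule A_decomp[OF sym, symmetric])
  also have "\<dots> = u \<bullet> (A *v u)" by (simp add: inner_commute)
  finally show ?thesis .
qed

lemma eigval_le_lmax:
  assumes sym: "symmetric_mat (A::real^'n^'n)" and "A *v u = c *\<^sub>R u" "u \<noteq> 0"
  shows "c \<le> lambda_max A"
  using assms le_lmax[OF sym, of c] unfolding eigenvalues_def by blast

lemma nullform:
  assumes sym: "symmetric_mat (A::real^'n^'n)" and neg: "\<And>u. u \<bullet> (A *v u) \<le> 0"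
    and z: "u0 \<bullet> (A *v u0) = 0"
  shows "A *v u0 = 0"
proof -
  have q: "- (w \<bullet> (A *v u0)) = 0" for w
  proof (rule quad0)
    fix t :: real
    have sw: "u0 \<bullet> (A *v w) = w \<bullet> (A *v u0)"
      using sym_inner[OF sym, of w u0] by (simp add: inner_commute)
    have Aex: "A *v (u0 + t *\<^sub>R w) = A *v u0 + t *\<^sub>R (A *v w)"
      by (simp add: matrix_vector_right_distrib matrix_vector_mult_scaleR)
    have e1: "(u0 + t *\<^sub>R w) \<bullet> (A *v (u0 + t *\<^sub>R w)) = 2 * t * (w \<bullet> (A *v u0)) + t^2 * (w \<bullet> (A *v w))"
      unfolding Aex using sw z by (simp add: inner_add_left inner_add_right power2_eq_square algebra_simps)
    have "(u0 + t *\<^sub>R w) \<bullet> (A *v (u0 + t *\<^sub>R w)) \<le> 0" by (rule neg)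
    then show "0 \<le> 2 * t * (- (w \<bullet> (A *v u0))) + t^2 * (- (w \<bullet> (A *v w)))"
      unfolding e1 by simp
  qed
  have "(A *v u0) \<bullet> (A *v u0) = 0" using q[of "A *v u0"] by simp
  then show ?thesis by simp
qed

lemma col_zero:
  assumes "\<And>j. (A::real^'n^'n) *v axis j 1 = 0"
  shows "A = 0"
proof -
  have "A $ i $ j = 0" for i j
  proof -
    have "(A *v axis j 1) $ i = 0" using assms by simp
    then show ?thesis by (simp add: matrix_vector_mult_basis column_def)
  qed
  then show ?thesis by (simp add: vec_eq_iff)
qed

lemma diag_form: "axis i 1 \<bullet> ((A::real^'n^'n) *v axis i 1) = A $ i $ i"
  by (simp add: matrix_vector_mult_basis column_def inner_axis')

lemma symmetric_neg: "symmetric_mat A \<Longrightarrow> symmetric_mat (- (A::real^'n^'n))"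
  unfolding symmetric_mat_def by (simp add: transpose_def vec_eq_iff)

lemma lmax_pos:
  assumes "weighted_adj E A" "A \<noteq> 0"
  shows "lambda_max A > 0"
proof (rule ccontr)
  assume "\<not> lambda_max A > 0"
  have sym: "symmetric_mat A" using assms unfolding weighted_adj_def by simp
  have neg: "u \<bullet> (A *v u) \<le> 0" for u
    using ray_max[OF sym, of u] \<open>\<not> lambda_max A > 0\<close>
    by (smt (verit) inner_ge_zero mult_nonpos_nonneg)
  have "A *v axis j 1 = 0" for j
    using nullform[OF sym neg] diag_form[of j A] assms unfolding weighted_adj_def by simp
  then show False using col_zero assms by blast
qed

lemma lmin_neg:
  assumes "weighted_adj E A" "A \<noteq> 0"
  shows "lambda_min A < 0"
proof (rule ccontr)
  assume "\<not> lambda_min A < 0"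
  have sym: "symmetric_mat A" using assms unfolding weighted_adj_def by simp
  have neg: "u \<bullet> ((- A) *v u) \<le> 0" for u
  proof -
    have "0 \<le> u \<bullet> (A *v u)"
      using ray_min[OF sym, of u] \<open>\<not> lambda_min A < 0\<close>
      by (smt (verit) inner_ge_zero mult_nonneg_nonneg)
    moreover have "(- A) *v u = - (A *v u)" by (simp add: matrix_vector_mult_def vec_eq_iff sum_negf)
    ultimately show ?thesis by simp
  qed
  have nA: "(- A) *v w = - (A *v w)" for w by (simp add: matrix_vector_mult_def vec_eq_iff sum_negf)
  have "(- A) *v axis j 1 = 0" for j
    using nullform[OF symmetric_neg[OF sym] neg] diag_form[of j "- A"] assms unfolding weighted_adj_def by simp
  then have "A *v axis j 1 = 0" for j using nA by (metis neg_equal_0_iff_equal)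
  then show False using col_zero assms by blast
qed



definition Dsum :: "real set \<Rightarrow> (real \<Rightarrow> real) \<Rightarrow> real \<Rightarrow> real" where
  "Dsum C w x = (\<Sum>c\<in>C. w c * c / (1 - c * x)^2)"

lemma right_side:
  fixes C :: "real set" and w :: "real \<Rightarrow> real" and M :: real
  assumes fin: "finite C" and wpos: "\<And>c. c \<in> C \<Longrightarrow> w c > 0" and le: "\<And>c. c \<in> C \<Longrightarrow> c \<le> M" and M: "M > 0"
  shows "(M \<notin> C \<and> Dsum C w (1/M) \<le> 0) \<or> (\<exists>y. 0 \<le> y \<and> y \<le> 1/M \<and> (\<forall>c\<in>C. 1 - c * y > 0) \<and> Dsum C w y > 0)"
proof (cases "M \<in> C")
  case False
  have pos: "1 - c * (1/M) > 0" if "c \<in> C" for c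
  proof -
    have "c < M" using le[OF that] False that by (cases "c = M") auto
    then show ?thesis using M by (simp add: field_simps)
  qed
  show ?thesis
  proof (cases "Dsum C w (1/M) \<le> 0")
    case True then show ?thesis using False by blast
  next
    case F2: False
    then show ?thesis using pos M by (intro disjI2 exI[of _ "1/M"]) auto
  qed
next
  case True
  define K where "K = (\<Sum>c\<in>C. w c * \<bar>c\<bar>)"
  have K0: "K \<ge> 0" unfolding K_def using wpos by (intro sum_nonneg) (simp add: less_imp_le)
  define t where "t = min 1 (w M * M / (2 * (K + 1)))"
  have wM: "w M * M > 0" using wpos[OF True] M by simp
  have t0: "t > 0" unfolding t_def using wM K0 by simp
  have t1: "t \<le> 1" unfolding t_def by simp
  have t2: "t \<le> w M * M / (2 * (K + 1))" unfolding t_def by simp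
  define y where "y = (1 - t) / M"
  have y0: "0 \<le> y" unfolding y_def using t1 M by simp
  have y1: "y \<le> 1/M" unfolding y_def using t0 M by (simp add: divide_right_mono)
  have My: "1 - M * y = t" unfolding y_def using M by simp
  have pos: "1 - c * y > 0" if "c \<in> C" for c
  proof (cases "c \<le> 0")
    case True then show ?thesis using y0 by (smt (verit) mult_nonpos_nonneg)
  next
    case False
    have "c * y \<le> M * y" using le[OF that] y0 by (simp add: mult_right_mono)
    then show ?thesis using My t0 by linarith
  qed
  have tb: "w c * c / (1 - c * y)^2 \<ge> - (w c * \<bar>c\<bar>)" if "c \<in> C" for c
  proof (cases "c \<ge> 0")
    case True
    have "0 \<le> w c * c / (1 - c * y)^2" using True wpos[OF that] by simp
    moreover have "0 \<le> w c * \<bar>c\<bar>" using wpos[OF that] by simp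
    ultimately show ?thesis by linarith
  next
    case False
    have g1: "1 - c * y \<ge> 1" using False y0 by (simp add: mult_nonpos_nonneg)
    then have g2: "(1 - c * y)^2 \<ge> 1" by (simp add: one_le_power)
    have "w c * \<bar>c\<bar> / (1 - c * y)^2 \<le> w c * \<bar>c\<bar>"
      using frac_le[of "w c * \<bar>c\<bar>" "w c * \<bar>c\<bar>" 1 "(1 - c * y)^2"] g2 wpos[OF that] by simp
    moreover have "w c * c / (1 - c * y)^2 = - (w c * \<bar>c\<bar> / (1 - c * y)^2)" using False by simp
    ultimately show ?thesis by linarith
  qed
  have "Dsum C w y = w M * M / (1 - M * y)^2 + (\<Sum>c\<in>C - {M}. w c * c / (1 - c * y)^2)"
    unfolding Dsum_def using fin True by (simp add: sum.remove)
  also have "(\<Sum>c\<in>C - {M}. w c * c / (1 - c * y)^2) \<ge> (\<Sum>c\<in>C - {M}. - (w c * \<bar>c\<bar>))"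
    by (rule sum_mono) (simp add: tb)
  moreover have "(\<Sum>c\<in>C - {M}. - (w c * \<bar>c\<bar>)) \<ge> - K"
  proof -
    have "(\<Sum>c\<in>C - {M}. w c * \<bar>c\<bar>) \<le> K" unfolding K_def
      using fin wpos by (intro sum_mono2) (auto simp: less_imp_le)
    then show ?thesis by (simp add: sum_negf)
  qed
  moreover have "w M * M / (1 - M * y)^2 \<ge> 2 * (K + 1)"
  proof -
    have "t^2 \<le> t" using t0 t1 by (simp add: power2_eq_square mult_le_cancel_right1)
    have "2 * (K + 1) \<le> w M * M / t" using t2 t0 K0 by (simp add: le_divide_eq field_simps)
    also have "\<dots> \<le> w M * M / t^2" using \<open>t^2 \<le> t\<close> t0 wM by (simp add: frac_le)
    finally show ?thesis using My by simp
  qed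
  ultimately have "Dsum C w y > 0" using K0 by (smt (verit))
  then show ?thesis using y0 y1 pos by blast
qed


lemma Dsum_mirror:
  assumes "finite C"
  shows "Dsum (uminus ` C) (\<lambda>c. w (- c)) y = - Dsum C w (- y)"
proof -
  have "Dsum (uminus ` C) (\<lambda>c. w (- c)) y = (\<Sum>c\<in>C. w c * (- c) / (1 - (- c) * y)^2)"
    unfolding Dsum_def by (subst sum.reindex) (auto simp: inj_on_def)
  also have "\<dots> = - Dsum C w (- y)" unfolding Dsum_def by (simp add: sum_negf)
  finally show ?thesis .
qed

lemma Dsum_cont:
  assumes "\<And>x c. x \<in> {a..b} \<Longrightarrow> c \<in> C \<Longrightarrow> 1 - c * x > 0"
  shows "continuous_on {a..b} (Dsum C w)"
proof -
  have "continuous_on {a..b} (\<lambda>x. \<Sum>c\<in>C. w c * c / (1 - c * x)^2)"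
    using assms by (intro continuous_intros) (auto dest: assms)
  then show ?thesis unfolding Dsum_def[abs_def] by simp
qed

lemma xstar:
  fixes C :: "real set" and w :: "real \<Rightarrow> real" and m M :: real
  assumes fin: "finite C" and wpos: "\<And>c. c \<in> C \<Longrightarrow> w c > 0"
    and rng: "\<And>c. c \<in> C \<Longrightarrow> m \<le> c \<and> c \<le> M" and m: "m < 0" and M: "M > 0"
  shows "\<exists>x. 1/m \<le> x \<and> x \<le> 1/M \<and> (\<forall>c\<in>C. 1 - c * x > 0) \<and>
    (Dsum C w x = 0 \<or> (x = 1/M \<and> M \<notin> C \<and> Dsum C w x \<le> 0) \<or> (x = 1/m \<and> m \<notin> C \<and> 0 \<le> Dsum C w x))"
proof -
  have mM: "1/m \<le> 1/M"
  proof -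
    have "1/m < 0" using m by simp
    moreover have "0 < 1/M" using M by simp
    ultimately show ?thesis by linarith
  qed
  have le: "\<And>c. c \<in> C \<Longrightarrow> c \<le> M" using rng by blast
  have R: "(M \<notin> C \<and> Dsum C w (1/M) \<le> 0) \<or> (\<exists>y. 0 \<le> y \<and> y \<le> 1/M \<and> (\<forall>c\<in>C. 1 - c * y > 0) \<and> Dsum C w y > 0)"
    by (rule right_side[OF fin wpos le M])
  have L0: "(-m \<notin> uminus ` C \<and> Dsum (uminus ` C) (\<lambda>c. w (- c)) (1/(-m)) \<le> 0) \<or>
     (\<exists>y. 0 \<le> y \<and> y \<le> 1/(-m) \<and> (\<forall>c\<in>uminus ` C. 1 - c * y > 0) \<and> Dsum (uminus ` C) (\<lambda>c. w (- c)) y > 0)"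
    using fin m rng wpos by (intro right_side) auto
  have L: "(m \<notin> C \<and> Dsum C w (1/m) \<ge> 0) \<or> (\<exists>y. 1/m \<le> y \<and> y \<le> 0 \<and> (\<forall>c\<in>C. 1 - c * y > 0) \<and> Dsum C w y < 0)"
  proof (cases "-m \<notin> uminus ` C \<and> Dsum (uminus ` C) (\<lambda>c. w (- c)) (1/(-m)) \<le> 0")
    case True
    then have "m \<notin> C" by auto
    moreover have "Dsum C w (1/m) \<ge> 0" using True Dsum_mirror[OF fin, of w "1/(-m)"] by simp
    ultimately show ?thesis by blast
  next
    case False
    then obtain y where y: "0 \<le> y" "y \<le> 1/(-m)" "\<forall>c\<in>uminus ` C. 1 - c * y > 0" "Dsum (uminus ` C) (\<lambda>c. w (- c)) y > 0"
    proof -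
      from L0 show thesis
      proof
        assume "-m \<notin> uminus ` C \<and> Dsum (uminus ` C) (\<lambda>c. w (- c)) (1/(-m)) \<le> 0"
        with False show thesis by contradiction
      next
        assume "\<exists>y. 0 \<le> y \<and> y \<le> 1/(-m) \<and> (\<forall>c\<in>uminus ` C. 1 - c * y > 0) \<and> Dsum (uminus ` C) (\<lambda>c. w (- c)) y > 0"
        then show thesis using that by blast
      qed
    qed
    have "1/(-m) = -(1/m)" by simp
    then have "1/m \<le> -y" using y(2) by linarith
    moreover have "\<forall>c\<in>C. 1 - c * (-y) > 0" using y(3) by auto
    moreover have "Dsum C w (-y) < 0" using y(4) Dsum_mirror[OF fin, of w y] by simp
    ultimately show ?thesis using y(1) by (intro disjI2 exI[of _ "-y"]) auto
  qed
  have Mpos: "\<forall>c\<in>C. 1 - c * (1/M) > 0" if "M \<notin> C"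
  proof
    fix c assume c: "c \<in> C"
    have "c < M" using rng[OF c] that c by (cases "c = M") auto
    then show "1 - c * (1/M) > 0" using M by (simp add: field_simps)
  qed
  have mpos: "\<forall>c\<in>C. 1 - c * (1/m) > 0" if "m \<notin> C"
  proof
    fix c assume c: "c \<in> C"
    have "m < c" using rng[OF c] that c by (cases "c = m") auto
    then show "1 - c * (1/m) > 0" using m by (simp add: field_simps)
  qed
  show ?thesis
  proof (cases "M \<notin> C \<and> Dsum C w (1/M) \<le> 0")
    case True
    then show ?thesis using Mpos mM by blast
  next
    case F1: False
    show ?thesis
    proof (cases "m \<notin> C \<and> Dsum C w (1/m) \<ge> 0")
      case True
      then show ?thesis using mpos mM by blast
    next
      case F2: False
      obtain b where b: "0 \<le> b" "b \<le> 1/M" "\<forall>c\<in>C. 1 - c * b > 0" "Dsum C w b > 0" using R F1 by blast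
      obtain a where a: "1/m \<le> a" "a \<le> 0" "\<forall>c\<in>C. 1 - c * a > 0" "Dsum C w a < 0" using L F2 by blast
      have pos: "1 - c * x > 0" if "x \<in> {a..b}" "c \<in> C" for x c
      proof (cases "c \<ge> 0")
        case True
        have "c * x \<le> c * b" using that True by (simp add: mult_left_mono)
        then show ?thesis using b(3) that by fastforce
      next
        case False
        have "c * x \<le> c * a" using that False by (simp add: mult_left_mono_neg)
        then show ?thesis using a(3) that by fastforce
      qed
      have "\<exists>x. a \<le> x \<and> x \<le> b \<and> Dsum C w x = 0"
      proof -
        have cont: "continuous_on {a..b} (Dsum C w)" by (rule Dsum_cont) (rule pos)
        have ab: "a \<le> b" using a b by linarith
        have "Dsum C w a \<le> 0" "0 \<le> Dsum C w b" using a(4) b(4) by simp_all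
        then show ?thesis using IVT'[of "Dsum C w" a 0 b, OF _ _ ab cont] by blast
      qed
      then obtain x where x: "a \<le> x" "x \<le> b" "Dsum C w x = 0" by blast
      show ?thesis using x a b pos by (intro exI[of _ x]) auto
    qed
  qed
qed



definition Cset :: "real^'n^'n \<Rightarrow> real set" where
  "Cset A = {c\<in>eigenvalues A. spec_weight A c \<noteq> 0}"

definition Wf :: "real^'n^'n \<Rightarrow> real \<Rightarrow> real" where
  "Wf A x = (\<Sum>c\<in>Cset A. spec_weight A c / (1 - c * x))"

definition v0 :: "real^'n^'n \<Rightarrow> real \<Rightarrow> real^'n" where
  "v0 A x = (\<Sum>c\<in>Cset A. (1 / (1 - c * x)) *\<^sub>R Pr A c ones)"

lemma wt_eq: "spec_weight A c = Pr A c ones \<bullet> Pr A c ones"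
  unfolding spec_weight_def Pr_def[symmetric] by (metis Pr_inner inner_commute)

lemma wt_nonneg: "spec_weight A c \<ge> 0"
  by (simp add: wt_eq)

lemma wt_zero: "spec_weight A c = 0 \<Longrightarrow> Pr A c ones = 0"
  by (simp add: wt_eq)

lemma Cset_fin: "symmetric_mat A \<Longrightarrow> finite (Cset A)"
  unfolding Cset_def by (simp add: eig_finite)

lemma Cset_sub: "Cset A \<subseteq> eigenvalues A"
  unfolding Cset_def by auto

lemma Cset_pos: "c \<in> Cset A \<Longrightarrow> spec_weight A c > 0"
  unfolding Cset_def using wt_nonneg[of A c] by auto

lemma Pr_orth2: "symmetric_mat A \<Longrightarrow> c \<noteq> d \<Longrightarrow> Pr A c u \<bullet> Pr A d y = 0"
  using eig_orth Pr_eig by blast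

lemma ones_decomp:
  assumes sym: "symmetric_mat A"
  shows "ones \<bullet> u = (\<Sum>c\<in>Cset A. Pr A c ones \<bullet> Pr A c u)"
proof -
  have "ones \<bullet> u = (\<Sum>c\<in>eigenvalues A. Pr A c ones \<bullet> Pr A c u)" by (rule inner_decomp[OF sym])
  also have "\<dots> = (\<Sum>c\<in>Cset A. Pr A c ones \<bullet> Pr A c u)"
    by (rule sum.mono_neutral_right[OF eig_finite[OF sym] Cset_sub]) (auto simp: Cset_def dest: wt_zero)
  finally show ?thesis .
qed

lemma Pr_sum_inner:
  assumes sym: "symmetric_mat A" and c: "c \<in> Cset A"
  shows "Pr A c u \<bullet> (\<Sum>d\<in>Cset A. g d *\<^sub>R Pr A d y) = g c * (Pr A c u \<bullet> Pr A c y)"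
proof -
  have "Pr A c u \<bullet> (\<Sum>d\<in>Cset A. g d *\<^sub>R Pr A d y) = (\<Sum>d\<in>Cset A. g d * (Pr A c u \<bullet> Pr A d y))"
    by (simp add: inner_sum_right)
  also have "\<dots> = g c * (Pr A c u \<bullet> Pr A c y) + (\<Sum>d\<in>Cset A - {c}. g d * (Pr A c u \<bullet> Pr A d y))"
    using Cset_fin[OF sym] c by (simp add: sum.remove)
  also have "(\<Sum>d\<in>Cset A - {c}. g d * (Pr A c u \<bullet> Pr A d y)) = 0"
    by (rule sum.neutral) (use Pr_orth2[OF sym] in auto)
  finally show ?thesis by simp
qed

lemma A_sumPr: "A *v (\<Sum>d\<in>S. g d *\<^sub>R Pr A d y) = (\<Sum>d\<in>S. (g d * d) *\<^sub>R Pr A d y)"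
proof -
  have "A *v (\<Sum>d\<in>S. g d *\<^sub>R Pr A d y) = (\<Sum>d\<in>S. A *v (g d *\<^sub>R Pr A d y))"
    using linear_sum[OF matrix_vector_mul_linear[of A]] by (simp add: o_def)
  also have "\<dots> = (\<Sum>d\<in>S. (g d * d) *\<^sub>R Pr A d y)"
    by (simp add: matrix_vector_mult_scaleR Pr_A)
  finally show ?thesis .
qed

lemma sumPr_inner_left:
  assumes sym: "symmetric_mat A"
  shows "(\<Sum>d\<in>Cset A. g d *\<^sub>R Pr A d ones) \<bullet> u = (\<Sum>d\<in>Cset A. g d * (Pr A d ones \<bullet> Pr A d u))"
  by (simp add: inner_sum_left) (metis Pr_inner)


lemma discr:
  fixes a b g :: real
  assumes H: "\<And>t. 0 \<le> a - 2 * t * b + t^2 * g" and g0: "g \<ge> 0"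
  shows "b^2 \<le> a * g"
proof (cases "g = 0")
  case True
  have "b = 0"
  proof (rule ccontr)
    assume "b \<noteq> 0"
    have "0 \<le> a - 2 * ((a + 1) / (2 * b)) * b + ((a + 1) / (2 * b))^2 * g" by (rule H)
    also have "\<dots> = -1" using True \<open>b \<noteq> 0\<close> by (simp add: field_simps)
    finally show False by simp
  qed
  then show ?thesis using True by simp
next
  case False
  then have gp: "g > 0" using g0 by simp
  have "0 \<le> a - 2 * (b / g) * b + (b / g)^2 * g" by (rule H)
  also have "\<dots> = (a * g - b^2) / g" using gp by (simp add: field_simps power2_eq_square)
  finally show ?thesis using gp by (simp add: zero_le_divide_iff)
qed

lemma v0_q:
  assumes sym: "symmetric_mat A" and pos: "\<And>c. c \<in> Cset A \<Longrightarrow> 1 - c * x \<noteq> 0"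
  shows "v0 A x \<bullet> u - x * ((A *v v0 A x) \<bullet> u) = ones \<bullet> u"
proof -
  have "v0 A x \<bullet> u = (\<Sum>c\<in>Cset A. (1 / (1 - c * x)) * (Pr A c ones \<bullet> Pr A c u))"
    unfolding v0_def by (rule sumPr_inner_left[OF sym])
  moreover have "(A *v v0 A x) \<bullet> u = (\<Sum>c\<in>Cset A. (1 / (1 - c * x) * c) * (Pr A c ones \<bullet> Pr A c u))"
    unfolding v0_def A_sumPr by (rule sumPr_inner_left[OF sym])
  ultimately have "v0 A x \<bullet> u - x * ((A *v v0 A x) \<bullet> u) =
     (\<Sum>c\<in>Cset A. (1 / (1 - c * x)) * (Pr A c ones \<bullet> Pr A c u) - x * ((1 / (1 - c * x) * c) * (Pr A c ones \<bullet> Pr A c u)))"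
    by (simp add: sum_subtractf sum_distrib_left)
  also have "\<dots> = (\<Sum>c\<in>Cset A. Pr A c ones \<bullet> Pr A c u)"
  proof (rule sum.cong[OF refl])
    fix c assume "c \<in> Cset A"
    then have nz: "1 - c * x \<noteq> 0" by (rule pos)
    have "(1 / (1 - c * x)) * (Pr A c ones \<bullet> Pr A c u) - x * ((1 / (1 - c * x) * c) * (Pr A c ones \<bullet> Pr A c u))
      = (1 / (1 - c * x)) * ((1 - c * x) * (Pr A c ones \<bullet> Pr A c u))" by (simp add: algebra_simps)
    also have "\<dots> = Pr A c ones \<bullet> Pr A c u" using nz by simp
    finally show "(1 / (1 - c * x)) * (Pr A c ones \<bullet> Pr A c u) - x * ((1 / (1 - c * x) * c) * (Pr A c ones \<bullet> Pr A c u))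
      = Pr A c ones \<bullet> Pr A c u" .
  qed
  also have "\<dots> = ones \<bullet> u" by (rule ones_decomp[OF sym, symmetric])
  finally show ?thesis .
qed

lemma ones_v0:
  assumes sym: "symmetric_mat A"
  shows "ones \<bullet> v0 A x = Wf A x"
proof -
  have "ones \<bullet> v0 A x = v0 A x \<bullet> ones" by (simp add: inner_commute)
  also have "\<dots> = (\<Sum>c\<in>Cset A. (1 / (1 - c * x)) * (Pr A c ones \<bullet> Pr A c ones))"
    unfolding v0_def by (rule sumPr_inner_left[OF sym])
  also have "\<dots> = Wf A x" unfolding Wf_def wt_eq by simp
  finally show ?thesis .
qed

lemma psd:
  assumes sym: "symmetric_mat A" and nn: "\<And>c. c \<in> eigenvalues A \<Longrightarrow> 1 - c * x \<ge> 0"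
  shows "0 \<le> u \<bullet> u - x * ((A *v u) \<bullet> u)"
proof -
  have "u \<bullet> u - x * ((A *v u) \<bullet> u) = (\<Sum>c\<in>eigenvalues A. (Pr A c u \<bullet> Pr A c u) - x * (c * (Pr A c u \<bullet> Pr A c u)))"
    by (simp add: inner_decomp[OF sym, of u u] A_decomp[OF sym] sum_subtractf sum_distrib_left)
  also have "\<dots> = (\<Sum>c\<in>eigenvalues A. (1 - c * x) * (Pr A c u \<bullet> Pr A c u))"
    by (rule sum.cong[OF refl]) (simp add: algebra_simps)
  also have "\<dots> \<ge> 0" by (rule sum_nonneg) (auto intro!: mult_nonneg_nonneg nn)
  finally show ?thesis .
qed

lemma CS:
  assumes sym: "symmetric_mat A" and nn: "\<And>c. c \<in> eigenvalues A \<Longrightarrow> 1 - c * x \<ge> 0"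
    and pos: "\<And>c. c \<in> Cset A \<Longrightarrow> 1 - c * x \<noteq> 0"
  shows "(ones \<bullet> u)^2 \<le> Wf A x * (u \<bullet> u - x * ((A *v u) \<bullet> u))"
proof (rule discr)
  define y where "y = v0 A x"
  have qyu: "y \<bullet> u - x * ((A *v y) \<bullet> u) = ones \<bullet> u" unfolding y_def by (rule v0_q[OF sym pos])
  have qyy: "y \<bullet> y - x * ((A *v y) \<bullet> y) = Wf A x"
    using v0_q[OF sym pos, of y] ones_v0[OF sym, of x] unfolding y_def by simp
  have su: "(A *v u) \<bullet> y = (A *v y) \<bullet> u" using sym_inner[OF sym, of u y] by (simp add: inner_commute)
  fix t :: real
  have "0 \<le> (y - t *\<^sub>R u) \<bullet> (y - t *\<^sub>R u) - x * ((A *v (y - t *\<^sub>R u)) \<bullet> (y - t *\<^sub>R u))"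
    by (rule psd[OF sym nn])
  also have "(y - t *\<^sub>R u) \<bullet> (y - t *\<^sub>R u) = y \<bullet> y - 2 * t * (y \<bullet> u) + t^2 * (u \<bullet> u)"
    by (simp add: inner_diff_left inner_diff_right power2_eq_square inner_commute algebra_simps)
  also have "(A *v (y - t *\<^sub>R u)) \<bullet> (y - t *\<^sub>R u) = (A *v y) \<bullet> y - 2 * t * ((A *v y) \<bullet> u) + t^2 * ((A *v u) \<bullet> u)"
    using su by (simp add: matrix_vector_mult_diff_distrib matrix_vector_mult_scaleR inner_diff_left inner_diff_right power2_eq_square algebra_simps)
  finally have "0 \<le> (y \<bullet> y - x * ((A *v y) \<bullet> y)) - 2 * t * (y \<bullet> u - x * ((A *v y) \<bullet> u)) + t^2 * (u \<bullet> u - x * ((A *v u) \<bullet> u))"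
    by (simp add: algebra_simps)
  then show "0 \<le> Wf A x - 2 * t * (ones \<bullet> u) + t^2 * (u \<bullet> u - x * ((A *v u) \<bullet> u))"
    unfolding qyu qyy .
next
  show "0 \<le> u \<bullet> u - x * ((A *v u) \<bullet> u)" by (rule psd[OF sym nn])
qed


lemma Pr_v0:
  assumes sym: "symmetric_mat A" and c: "c \<in> Cset A"
  shows "Pr A c ones \<bullet> v0 A x = (1 / (1 - c * x)) * spec_weight A c"
  unfolding v0_def Pr_sum_inner[OF sym c] wt_eq ..

lemma Pr_Av0:
  assumes sym: "symmetric_mat A" and c: "c \<in> Cset A"
  shows "Pr A c ones \<bullet> (A *v v0 A x) = (1 / (1 - c * x) * c) * spec_weight A c"
  unfolding v0_def A_sumPr Pr_sum_inner[OF sym c] wt_eq ..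

lemma v0_v0:
  assumes sym: "symmetric_mat A"
  shows "v0 A x \<bullet> v0 A x = (\<Sum>c\<in>Cset A. (1 / (1 - c * x)) * ((1 / (1 - c * x)) * spec_weight A c))"
proof -
  have "v0 A x \<bullet> v0 A x = (\<Sum>c\<in>Cset A. (1 / (1 - c * x)) * (Pr A c ones \<bullet> v0 A x))"
    unfolding v0_def[of A x, THEN arg_cong[where f="\<lambda>z. z \<bullet> v0 A x"]] by (simp add: inner_sum_left)
  also have "\<dots> = (\<Sum>c\<in>Cset A. (1 / (1 - c * x)) * ((1 / (1 - c * x)) * spec_weight A c))"
    by (rule sum.cong[OF refl]) (simp add: Pr_v0[OF sym])
  finally show ?thesis .
qed

lemma v0_Av0:
  assumes sym: "symmetric_mat A"
  shows "v0 A x \<bullet> (A *v v0 A x) = (\<Sum>c\<in>Cset A. (1 / (1 - c * x)) * ((1 / (1 - c * x) * c) * spec_weight A c))"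
proof -
  have "v0 A x \<bullet> (A *v v0 A x) = (\<Sum>c\<in>Cset A. (1 / (1 - c * x)) * (Pr A c ones \<bullet> (A *v v0 A x)))"
    unfolding v0_def[of A x, THEN arg_cong[where f="\<lambda>z. z \<bullet> (A *v v0 A x)"]] by (simp add: inner_sum_left)
  also have "\<dots> = (\<Sum>c\<in>Cset A. (1 / (1 - c * x)) * ((1 / (1 - c * x) * c) * spec_weight A c))"
    by (rule sum.cong[OF refl]) (simp add: Pr_Av0[OF sym])
  finally show ?thesis .
qed

lemma V1:
  assumes sym: "symmetric_mat A"
  shows "v0 A x \<bullet> (A *v v0 A x) = Dsum (Cset A) (spec_weight A) x"
  unfolding v0_Av0[OF sym] Dsum_def
  by (rule sum.cong[OF refl]) (simp add: power2_eq_square)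

lemma V2:
  assumes sym: "symmetric_mat A" and pos: "\<And>c. c \<in> Cset A \<Longrightarrow> 1 - c * x \<noteq> 0"
  shows "v0 A x \<bullet> v0 A x - ones \<bullet> v0 A x = x * Dsum (Cset A) (spec_weight A) x"
proof -
  have "v0 A x \<bullet> v0 A x - ones \<bullet> v0 A x =
     (\<Sum>c\<in>Cset A. (1 / (1 - c * x)) * ((1 / (1 - c * x)) * spec_weight A c) - spec_weight A c / (1 - c * x))"
    unfolding v0_v0[OF sym] ones_v0[OF sym] Wf_def by (simp add: sum_subtractf)
  also have "\<dots> = (\<Sum>c\<in>Cset A. x * (spec_weight A c * c / (1 - c * x)^2))"
  proof (rule sum.cong[OF refl])
    fix c assume "c \<in> Cset A"
    then have nz: "1 - c * x \<noteq> 0" by (rule pos)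
    define d where "d = 1 - c * x"
    define w where "w = spec_weight A c"
    have dn: "d \<noteq> 0" using nz unfolding d_def .
    have "x * (w * c / d^2) = w * (x * c) / d^2" by simp
    also have "\<dots> = w * (1 - d) / d^2" unfolding d_def by (simp add: mult.commute)
    also have "\<dots> = (1 / d) * ((1 / d) * w) - w / d" using dn by (simp add: field_simps power2_eq_square)
    finally show "(1 / (1 - c * x)) * ((1 / (1 - c * x)) * spec_weight A c) - spec_weight A c / (1 - c * x) =
      x * (spec_weight A c * c / (1 - c * x)^2)" unfolding d_def w_def by simp
  qed
  also have "\<dots> = x * Dsum (Cset A) (spec_weight A) x" unfolding Dsum_def by (simp add: sum_distrib_left)
  finally show ?thesis .
qed

lemma construct:
  assumes sym: "symmetric_mat A" and pos: "\<And>c. c \<in> Cset A \<Longrightarrow> 1 - c * x \<noteq> 0"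
    and Ae: "A *v e = \<mu> *\<^sub>R e" and e1: "ones \<bullet> e = 0" and ec: "\<And>c. c \<in> Cset A \<Longrightarrow> Pr A c ones \<bullet> e = 0"
    and h1: "Dsum (Cset A) (spec_weight A) x + t^2 * \<mu> * (e \<bullet> e) = 0"
    and h2: "x * Dsum (Cset A) (spec_weight A) x + t^2 * (e \<bullet> e) = 0"
  shows "\<exists>v. v \<in> sphere_S \<and> v \<bullet> (A *v v) = 0 \<and> (norm v)^2 = Wf A x"
proof -
  define y where "y = v0 A x"
  define D where "D = Dsum (Cset A) (spec_weight A) x"
  define v where "v = y + t *\<^sub>R e"
  have ye: "y \<bullet> e = 0" unfolding y_def v0_def by (simp add: inner_sum_left ec)
  have eAy: "e \<bullet> (A *v y) = 0"
  proof -
    have "e \<bullet> (A *v y) = (A *v e) \<bullet> y" using sym_inner[OF sym, of e y] by simp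
    also have "\<dots> = 0" using Ae ye by (simp add: inner_commute)
    finally show ?thesis .
  qed
  have o: "ones \<bullet> v = Wf A x" unfolding v_def y_def using ones_v0[OF sym] e1 by (simp add: inner_add_right)
  have vv: "v \<bullet> v = y \<bullet> y + t^2 * (e \<bullet> e)"
    unfolding v_def using ye by (simp add: inner_add_left inner_add_right inner_commute power2_eq_square)
  have Av: "A *v v = A *v y + (t * \<mu>) *\<^sub>R e"
    unfolding v_def using Ae by (simp add: matrix_vector_right_distrib matrix_vector_mult_scaleR)
  have vAv: "v \<bullet> (A *v v) = D + t^2 * \<mu> * (e \<bullet> e)"
    unfolding Av unfolding v_def using ye eAy V1[OF sym, of x] unfolding y_def[symmetric] D_def[symmetric]
    by (simp add: inner_add_left inner_add_right power2_eq_square algebra_simps)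
  have "y \<bullet> y = Wf A x + x * D"
    using V2[OF sym pos] ones_v0[OF sym, of x] unfolding y_def[symmetric] D_def[symmetric] by simp
  then have vv2: "v \<bullet> v = Wf A x" using vv h2 unfolding D_def[symmetric] by simp
  have "v \<in> sphere_S" unfolding sphere_S_def using o vv2 by (simp add: power2_norm_eq_inner)
  moreover have "v \<bullet> (A *v v) = 0" using vAv h1 unfolding D_def by simp
  moreover have "(norm v)^2 = Wf A x" using vv2 by (simp add: power2_norm_eq_inner)
  ultimately show ?thesis by blast
qed



definition Jm :: "real^'n^'n" where "Jm = (\<chi> i j. 1)"

definition SV :: "real^'n^'n \<Rightarrow> real" where
  "SV A = Sup {(norm v)\<^sup>2 | v. v \<in> sphere_S \<and> v \<bullet> (A *v v) = 0}"

lemma Jm_mult: "Jm *v u = (ones \<bullet> u) *\<^sub>R ones"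
  by (simp add: Jm_def ones_def matrix_vector_mult_def vec_eq_iff inner_vec_def)

lemma ones_ones: "ones \<bullet> (ones::real^'n) = real CARD('n)"
  by (simp add: ones_def inner_vec_def)

lemma uJu: "u \<bullet> (Jm *v u) = (ones \<bullet> u)^2"
  by (simp add: Jm_mult power2_eq_square inner_commute)

lemma nn_int:
  assumes sym: "symmetric_mat A" and m: "lambda_min A < 0" and M: "lambda_max A > 0"
    and x: "x \<in> {1 / lambda_min A .. 1 / lambda_max A}" and c: "c \<in> eigenvalues A"
  shows "1 - c * x \<ge> 0"
proof -
  define a where "a = lambda_min A"
  define b where "b = lambda_max A"
  have ac: "a \<le> c" and cb: "c \<le> b" using ge_lmin[OF sym c] le_lmax[OF sym c] unfolding a_def b_def by auto
  have a0: "a < 0" and b0: "b > 0" using m M unfolding a_def b_def by auto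
  have x1: "1 / a \<le> x" and x2: "x \<le> 1 / b" using x unfolding a_def b_def by auto
  have bx: "b * x \<le> 1" using x2 b0 by (simp add: le_divide_eq mult.commute)
  have ax: "a * x \<le> 1" using x1 a0 by (simp add: divide_le_eq mult.commute)
  show ?thesis
  proof (cases "x \<ge> 0")
    case True
    have "c * x \<le> b * x" using cb True by (simp add: mult_right_mono)
    then show ?thesis using bx by linarith
  next
    case False
    have "c * x \<le> a * x" using ac False by (simp add: mult_right_mono_neg)
    then show ?thesis using ax by linarith
  qed
qed

lemma walk_ok:
  assumes "\<And>c. c \<in> Cset A \<Longrightarrow> 1 - c * x \<noteq> 0"
  shows "walk_gen A x = ereal (Wf A x)"
proof -
  have "\<not> (\<exists>c\<in>eigenvalues A. spec_weight A c > 0 \<and> c * x = 1)"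
    using assms unfolding Cset_def by force
  then show ?thesis unfolding walk_gen_def Wf_def Cset_def by simp
qed

lemma walk_bad:
  assumes "c \<in> Cset A" "1 - c * x = 0"
  shows "walk_gen A x = \<infinity>"
proof -
  have "\<exists>c\<in>eigenvalues A. spec_weight A c > 0 \<and> c * x = 1"
    using assms Cset_pos[OF assms(1)] Cset_sub by (intro bexI[of _ c]) auto
  then show ?thesis unfolding walk_gen_def by simp
qed

lemma SV_set_bdd:
  fixes v :: "real^'n"
  assumes v: "v \<in> sphere_S"
  shows "(norm v)^2 \<le> (norm (ones::real^'n))^2"
proof -
  have e: "(norm v)^2 = ones \<bullet> v" using v unfolding sphere_S_def by simp
  also have "\<dots> \<le> norm (ones::real^'n) * norm v" by (rule norm_cauchy_schwarz)
  finally have "norm v * norm v \<le> norm (ones::real^'n) * norm v" by (simp add: power2_eq_square)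
  then have "norm v \<le> norm (ones::real^'n) \<or> norm v = 0"
    by (metis mult_right_le_imp_le norm_ge_zero order_le_less)
  then show ?thesis by (auto simp: power_mono)
qed

lemma SV_upper:
  assumes "v \<in> sphere_S" "v \<bullet> (A *v v) = 0"
  shows "(norm v)^2 \<le> SV A"
  unfolding SV_def
proof (rule cSup_upper)
  show "(norm v)^2 \<in> {(norm v)\<^sup>2 | v. v \<in> sphere_S \<and> v \<bullet> (A *v v) = 0}" using assms by blast
  show "bdd_above {(norm v)\<^sup>2 | v. v \<in> sphere_S \<and> v \<bullet> (A *v v) = 0}"
    unfolding bdd_above_def using SV_set_bdd by blast
qed

lemma SV_least:
  assumes "\<And>v. v \<in> sphere_S \<Longrightarrow> v \<bullet> (A *v v) = 0 \<Longrightarrow> (norm v)^2 \<le> b"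
  shows "SV A \<le> b"
  unfolding SV_def
proof (rule cSup_least)
  have "(0::real^'n) \<in> sphere_S" unfolding sphere_S_def by simp
  then show "{(norm v)\<^sup>2 | v. v \<in> sphere_S \<and> v \<bullet> (A *v v) = 0} \<noteq> {}" by auto
  show "\<And>y. y \<in> {(norm v)\<^sup>2 | v. v \<in> sphere_S \<and> v \<bullet> (A *v v) = 0} \<Longrightarrow> y \<le> b" using assms by blast
qed

lemma SV_nonneg: "SV A \<ge> 0"
proof -
  have "(0::real^'n) \<in> sphere_S" unfolding sphere_S_def by simp
  then show ?thesis using SV_upper[of 0 A] by simp
qed

lemma SV_zero: "SV (0::real^'n^'n) = real CARD('n)"
proof (rule antisym)
  show "SV (0::real^'n^'n) \<le> real CARD('n)"
    by (rule SV_least) (use SV_set_bdd in \<open>simp add: power2_norm_eq_inner ones_ones\<close>)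
  have "(ones::real^'n) \<in> sphere_S" unfolding sphere_S_def by (simp add: power2_norm_eq_inner)
  then have "(norm (ones::real^'n))^2 \<le> SV (0::real^'n^'n)" by (rule SV_upper) simp
  then show "real CARD('n) \<le> SV (0::real^'n^'n)" by (simp add: power2_norm_eq_inner ones_ones)
qed


definition adm :: "('n::finite \<Rightarrow> 'n \<Rightarrow> bool) \<Rightarrow> real^'n^'n \<Rightarrow> bool" where
  "adm E B \<longleftrightarrow> symmetric_mat B \<and> (\<forall>i j. (i = j \<or> \<not> E i j) \<longrightarrow> B $ i $ j = 1)"

lemma theta_def': "lovasz_theta E = Inf {lambda_max B | B. adm E B}"
  unfolding lovasz_theta_def adm_def ..

lemma lmax_ge1: "adm E B \<Longrightarrow> 1 \<le> lambda_max B"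
proof -
  assume a: "adm E B"
  then have sym: "symmetric_mat B" unfolding adm_def by simp
  have "B $ undefined $ undefined = 1" using a unfolding adm_def by simp
  then have "axis undefined 1 \<bullet> (B *v axis undefined 1) = 1" by (simp add: diag_form)
  moreover have "axis undefined 1 \<bullet> (B *v axis undefined 1) \<le> lambda_max B * (axis undefined 1 \<bullet> axis (undefined::'a) (1::real))"
    by (rule ray_max[OF sym])
  ultimately show ?thesis by (simp add: inner_axis_axis)
qed

lemma theta_le_lmax: "adm E B \<Longrightarrow> lovasz_theta E \<le> lambda_max B"
  unfolding theta_def'
proof (rule cInf_lower)
  assume "adm E B"
  then show "lambda_max B \<in> {lambda_max B | B. adm E B}" by blast
  show "bdd_below {lambda_max B | B. adm E B}" unfolding bdd_below_def using lmax_ge1 by blast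
qed

lemma lmax_le:
  assumes sym: "symmetric_mat B" and H: "\<And>u c. B *v u = c *\<^sub>R u \<Longrightarrow> u \<noteq> 0 \<Longrightarrow> c \<le> W"
  shows "lambda_max B \<le> W"
  using lmax_in[OF sym] H unfolding eigenvalues_def by blast

lemma Jm_adm: "adm E Jm"
  unfolding adm_def symmetric_mat_def Jm_def by (simp add: transpose_def vec_eq_iff)

lemma theta_le_n: "lovasz_theta E \<le> real CARD('n)" for E :: "'n::finite \<Rightarrow> 'n \<Rightarrow> bool"
proof -
  have "lambda_max (Jm::real^'n^'n) \<le> real CARD('n)"
  proof (rule lmax_le)
    show "symmetric_mat (Jm::real^'n^'n)" using Jm_adm unfolding adm_def by blast
    fix u :: "real^'n" and c assume u: "Jm *v u = c *\<^sub>R u" "u \<noteq> 0"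
    have "c * (u \<bullet> u) = u \<bullet> (Jm *v u)" using u by simp
    also have "\<dots> = (ones \<bullet> u)^2" by (rule uJu)
    also have "\<dots> \<le> ((ones::real^'n) \<bullet> ones) * (u \<bullet> u)" by (rule Cauchy_Schwarz_ineq)
    finally have "c * (u \<bullet> u) \<le> real CARD('n) * (u \<bullet> u)" by (simp add: ones_ones)
    moreover have "u \<bullet> u > 0" using u by simp
    ultimately show "c \<le> real CARD('n)" by simp
  qed
  then show ?thesis using theta_le_lmax[OF Jm_adm, of E] by simp
qed

lemma wadj_sym: "weighted_adj E A \<Longrightarrow> symmetric_mat A"
  unfolding weighted_adj_def by simp

lemma sym_entry: "symmetric_mat A \<Longrightarrow> A $ j $ i = A $ i $ j"
  unfolding symmetric_mat_def by (metis transpose_def vec_lambda_beta)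

lemma theta_le_Wf:
  assumes wa: "weighted_adj E A" and nn: "\<And>c. c \<in> eigenvalues A \<Longrightarrow> 1 - c * x \<ge> 0"
    and pos: "\<And>c. c \<in> Cset A \<Longrightarrow> 1 - c * x \<noteq> 0"
  shows "lovasz_theta E \<le> Wf A x"
proof -
  have sym: "symmetric_mat A" using wa by (rule wadj_sym)
  define s where "s = Wf A x * x"
  define B where "B = Jm + s *\<^sub>R A"
  have Bij: "B $ i $ j = 1 + s * A $ i $ j" for i j unfolding B_def Jm_def by simp
  have admB: "adm E B" unfolding adm_def symmetric_mat_def
  proof (intro conjI allI impI)
    show "transpose B = B" by (simp add: vec_eq_iff transpose_def Bij sym_entry[OF sym])
    fix i j assume "i = j \<or> \<not> E i j"
    then have "A $ i $ j = 0" using wa unfolding weighted_adj_def by (cases "i = j") auto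
    then show "B $ i $ j = 1" by (simp add: Bij)
  qed
  have "lambda_max B \<le> Wf A x"
  proof (rule lmax_le)
    show "symmetric_mat B" using admB unfolding adm_def by blast
    fix u :: "real^'a" and c assume u: "B *v u = c *\<^sub>R u" "u \<noteq> 0"
    have "c * (u \<bullet> u) = u \<bullet> (B *v u)" using u by simp
    also have "\<dots> = (ones \<bullet> u)^2 + s * (u \<bullet> (A *v u))"
    proof -
      have "(s *\<^sub>R A) *v u = s *\<^sub>R (A *v u)"
        by (simp add: matrix_vector_mult_def vec_eq_iff sum_distrib_left mult.assoc)
      then show ?thesis unfolding B_def by (simp add: matrix_vector_mult_add_rdistrib inner_add_right uJu)
    qed
    also have "\<dots> \<le> Wf A x * (u \<bullet> u - x * ((A *v u) \<bullet> u)) + s * (u \<bullet> (A *v u))"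
      using CS[OF sym nn pos, of u] by simp
    also have "\<dots> = Wf A x * (u \<bullet> u)" unfolding s_def by (simp add: inner_commute algebra_simps)
    finally have "c * (u \<bullet> u) \<le> Wf A x * (u \<bullet> u)" .
    moreover have "u \<bullet> u > 0" using u by simp
    ultimately show "c \<le> Wf A x" by simp
  qed
  then show ?thesis using theta_le_lmax[OF admB] by simp
qed


lemma SV_le_Wf:
  assumes sym: "symmetric_mat A" and nn: "\<And>c. c \<in> eigenvalues A \<Longrightarrow> 1 - c * x \<ge> 0"
    and pos: "\<And>c. c \<in> Cset A \<Longrightarrow> 1 - c * x \<noteq> 0"
  shows "SV A \<le> Wf A x"
proof (rule SV_least)
  fix v :: "real^'a" assume v: "v \<in> sphere_S" "v \<bullet> (A *v v) = 0"
  have o: "ones \<bullet> v = v \<bullet> v" using v unfolding sphere_S_def by (simp add: power2_norm_eq_inner)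
  have "(ones \<bullet> v)^2 \<le> Wf A x * (v \<bullet> v - x * ((A *v v) \<bullet> v))" by (rule CS[OF sym nn pos])
  then have "(v \<bullet> v) * (v \<bullet> v) \<le> Wf A x * (v \<bullet> v)" using v(2) o by (simp add: inner_commute power2_eq_square)
  moreover have "Wf A x \<ge> 0" unfolding Wf_def
  proof (rule sum_nonneg)
    fix c assume c: "c \<in> Cset A"
    have "1 - c * x \<ge> 0" using nn c Cset_sub by blast
    then have "1 - c * x > 0" using pos[OF c] by simp
    then show "0 \<le> spec_weight A c / (1 - c * x)" using wt_nonneg[of A c] by simp
  qed
  ultimately have "v \<bullet> v \<le> Wf A x"
    by (metis inner_ge_zero mult_right_le_imp_le order_le_less mult_eq_0_iff)
  then show "(norm v)^2 \<le> Wf A x" by (simp add: power2_norm_eq_inner)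
qed

lemma endpoint:
  assumes sym: "symmetric_mat A" and pos: "\<And>c. c \<in> Cset A \<Longrightarrow> 1 - c * x \<noteq> 0"
    and mu: "\<mu> \<in> eigenvalues A" "\<mu> \<notin> Cset A" "\<mu> \<noteq> 0" and x: "x = 1 / \<mu>"
    and sg: "Dsum (Cset A) (spec_weight A) x / \<mu> \<le> 0"
  shows "\<exists>v. v \<in> sphere_S \<and> v \<bullet> (A *v v) = 0 \<and> (norm v)^2 = Wf A x"
proof -
  define D where "D = Dsum (Cset A) (spec_weight A) x"
  obtain e where e: "e \<noteq> 0" "A *v e = \<mu> *\<^sub>R e" using mu(1) unfolding eigenvalues_def by blast
  have eE: "e \<in> eigenspace A \<mu>" using e unfolding eigenspace_def by simp
  have "spec_weight A \<mu> = 0" using mu unfolding Cset_def by simp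
  then have P0: "Pr A \<mu> ones = 0" by (rule wt_zero)
  have e1: "ones \<bullet> e = 0" using Pr_perp[OF eE, of ones] P0 by simp
  have ec: "Pr A c ones \<bullet> e = 0" if "c \<in> Cset A" for c
  proof -
    have "c \<noteq> \<mu>" using that mu(2) by auto
    then show ?thesis using eig_orth[OF sym Pr_eig eE] by blast
  qed
  have ee: "e \<bullet> e > 0" using e by simp
  define t where "t = sqrt (- D / (\<mu> * (e \<bullet> e)))"
  have nnq: "- D / (\<mu> * (e \<bullet> e)) \<ge> 0"
  proof -
    have "D / (\<mu> * (e \<bullet> e)) = (D / \<mu>) / (e \<bullet> e)" by (simp add: divide_divide_eq_left)
    moreover have "D / \<mu> \<le> 0" using sg unfolding D_def by simp
    moreover have "(D / \<mu>) / (e \<bullet> e) \<le> 0" using \<open>D / \<mu> \<le> 0\<close> ee by (rule divide_nonpos_pos)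
    ultimately have "D / (\<mu> * (e \<bullet> e)) \<le> 0" by simp
    then show ?thesis by simp
  qed
  have t2: "t^2 = - D / (\<mu> * (e \<bullet> e))" unfolding t_def using nnq by simp
  have h1: "D + t^2 * \<mu> * (e \<bullet> e) = 0" unfolding t2 using mu(3) ee by (simp add: field_simps)
  have h2: "x * D + t^2 * (e \<bullet> e) = 0" unfolding t2 x using mu(3) ee by (simp add: field_simps)
  show ?thesis
    by (rule construct[OF sym pos e(2) e1 ec]) (use h1 h2 in \<open>simp_all add: D_def\<close>)
qed

lemma perA:
  assumes wa: "weighted_adj E A" and nz: "A \<noteq> 0"
  shows "\<exists>x\<in>{1 / lambda_min A .. 1 / lambda_max A}. walk_gen A x = ereal (SV A) \<and>
     (\<forall>y\<in>{1 / lambda_min A .. 1 / lambda_max A}. ereal (SV A) \<le> walk_gen A y) \<and> lovasz_theta E \<le> SV A"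
proof -
  have sym: "symmetric_mat A" using wa by (rule wadj_sym)
  have m: "lambda_min A < 0" by (rule lmin_neg[OF wa nz])
  have M: "lambda_max A > 0" by (rule lmax_pos[OF wa nz])
  let ?I = "{1 / lambda_min A .. 1 / lambda_max A}"
  have rng: "lambda_min A \<le> c \<and> c \<le> lambda_max A" if "c \<in> Cset A" for c
    using that Cset_sub ge_lmin[OF sym] le_lmax[OF sym] by blast
  obtain x where x1: "1 / lambda_min A \<le> x" and x2: "x \<le> 1 / lambda_max A"
    and pos0: "\<forall>c\<in>Cset A. 1 - c * x > 0"
    and cases: "Dsum (Cset A) (spec_weight A) x = 0 \<or>
      (x = 1 / lambda_max A \<and> lambda_max A \<notin> Cset A \<and> Dsum (Cset A) (spec_weight A) x \<le> 0) \<or>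
      (x = 1 / lambda_min A \<and> lambda_min A \<notin> Cset A \<and> 0 \<le> Dsum (Cset A) (spec_weight A) x)"
    using xstar[of "Cset A" "spec_weight A", OF Cset_fin[OF sym] Cset_pos rng m M] by blast
  have xI: "x \<in> ?I" using x1 x2 by simp
  have pos: "\<And>c. c \<in> Cset A \<Longrightarrow> 1 - c * x \<noteq> 0" using pos0 by fastforce
  have nn: "\<And>c. c \<in> eigenvalues A \<Longrightarrow> 1 - c * x \<ge> 0" by (rule nn_int[OF sym m M xI])
  have ex: "\<exists>v. v \<in> sphere_S \<and> v \<bullet> (A *v v) = 0 \<and> (norm v)^2 = Wf A x"
  proof -
    consider (z) "Dsum (Cset A) (spec_weight A) x = 0"
      | (r) "x = 1 / lambda_max A" "lambda_max A \<notin> Cset A" "Dsum (Cset A) (spec_weight A) x \<le> 0"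
      | (l) "x = 1 / lambda_min A" "lambda_min A \<notin> Cset A" "0 \<le> Dsum (Cset A) (spec_weight A) x"
      using cases by blast
    then show ?thesis
    proof cases
      case z
      show ?thesis by (rule construct[OF sym pos, of 0 0 0]) (use z in simp_all)
    next
      case r
      show ?thesis
        by (rule endpoint[OF sym pos lmax_in[OF sym] r(2) _ r(1)]) (use M r(3) in \<open>simp_all add: divide_nonpos_pos\<close>)
    next
      case l
      show ?thesis
        by (rule endpoint[OF sym pos lmin_in[OF sym] l(2) _ l(1)]) (use m l(3) in \<open>simp_all add: divide_nonneg_neg\<close>)
    qed
  qed
  then obtain v where v: "v \<in> sphere_S" "v \<bullet> (A *v v) = 0" "(norm v)^2 = Wf A x" by blast
  have ge: "Wf A x \<le> SV A" using SV_upper[OF v(1) v(2)] v(3) by simp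
  have le: "SV A \<le> Wf A x" by (rule SV_le_Wf[OF sym nn pos])
  have eq: "SV A = Wf A x" using ge le by simp
  have w: "walk_gen A x = ereal (SV A)" using walk_ok[OF pos] eq by simp
  have all: "ereal (SV A) \<le> walk_gen A y" if y: "y \<in> ?I" for y
  proof (cases "\<forall>c\<in>Cset A. 1 - c * y \<noteq> 0")
    case T: True
    have pT: "\<And>c. c \<in> Cset A \<Longrightarrow> 1 - c * y \<noteq> 0" using T by blast
    have "SV A \<le> Wf A y" by (rule SV_le_Wf[OF sym nn_int[OF sym m M y] pT])
    then show ?thesis using walk_ok[of A y] T by simp
  next
    case False
    then obtain c where "c \<in> Cset A" "1 - c * y = 0" by blast
    then have "walk_gen A y = \<infinity>" by (rule walk_bad)
    then show ?thesis by simp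
  qed
  have th: "lovasz_theta E \<le> SV A" using theta_le_Wf[OF wa nn pos] eq by simp
  show ?thesis using xI w all th by blast
qed



lemma zero_wadj: "weighted_adj E 0"
  unfolding weighted_adj_def symmetric_mat_def by (simp add: transpose_def vec_eq_iff)

lemma inner_min_eq:
  fixes A :: "real^'n^'n"
  assumes wa: "weighted_adj E A"
  shows "inner_min A = ereal (SV A)"
proof (cases "A = 0")
  case True
  then show ?thesis unfolding inner_min_def using SV_zero[where 'n='n] by simp
next
  case False
  obtain x where x: "x \<in> {1 / lambda_min A .. 1 / lambda_max A}" "walk_gen A x = ereal (SV A)"
    and all: "\<forall>y\<in>{1 / lambda_min A .. 1 / lambda_max A}. ereal (SV A) \<le> walk_gen A y"
    using perA[OF wa False] by blast
  have "(INF y\<in>{1 / lambda_min A .. 1 / lambda_max A}. walk_gen A y) = ereal (SV A)"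
  proof (rule antisym)
    show "(INF y\<in>{1 / lambda_min A .. 1 / lambda_max A}. walk_gen A y) \<le> ereal (SV A)"
      using INF_lower[OF x(1), of "walk_gen A"] x(2) by simp
    show "ereal (SV A) \<le> (INF y\<in>{1 / lambda_min A .. 1 / lambda_max A}. walk_gen A y)"
      using all by (intro INF_greatest) blast
  qed
  then show ?thesis unfolding inner_min_def using False by simp
qed

lemma theta_le_SV:
  fixes A :: "real^'n^'n"
  assumes wa: "weighted_adj E A"
  shows "lovasz_theta E \<le> SV A"
proof (cases "A = 0")
  case True
  then show ?thesis using theta_le_n[of E] SV_zero[where 'n='n] by simp
next
  case False
  then show ?thesis using perA[OF wa False] by blast
qed

lemma wadj_BJ:
  assumes a: "adm E B"
  shows "weighted_adj E (B - Jm)"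
proof -
  have sym: "symmetric_mat B" using a unfolding adm_def by simp
  show ?thesis unfolding weighted_adj_def symmetric_mat_def
  proof (intro conjI allI impI)
    show "transpose (B - Jm) = B - Jm"
      by (simp add: vec_eq_iff transpose_def Jm_def sym_entry[OF sym])
    fix i show "(B - Jm) $ i $ i = 0" using a unfolding adm_def Jm_def by simp
  next
    fix i j assume "i \<noteq> j \<and> \<not> E i j"
    then show "(B - Jm) $ i $ j = 0" using a unfolding adm_def Jm_def by simp
  qed
qed

lemma SV_le_lmax:
  assumes a: "adm E B"
  shows "SV (B - Jm) \<le> lambda_max B"
proof (rule SV_least)
  have sym: "symmetric_mat B" using a unfolding adm_def by simp
  fix v :: "real^'a" assume v: "v \<in> sphere_S" "v \<bullet> ((B - Jm) *v v) = 0"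
  have o: "ones \<bullet> v = v \<bullet> v" using v unfolding sphere_S_def by (simp add: power2_norm_eq_inner)
  have "v \<bullet> (B *v v) = v \<bullet> (Jm *v v)"
    using v(2) by (simp add: matrix_vector_mult_diff_rdistrib inner_diff_right)
  also have "\<dots> = (v \<bullet> v) * (v \<bullet> v)" unfolding uJu o by (simp add: power2_eq_square)
  finally have "(v \<bullet> v) * (v \<bullet> v) \<le> lambda_max B * (v \<bullet> v)" using ray_max[OF sym, of v] by simp
  moreover have "1 \<le> lambda_max B" by (rule lmax_ge1[OF a])
  ultimately have "v \<bullet> v \<le> lambda_max B"
    by (metis inner_ge_zero mult_right_le_imp_le order_le_less order_trans zero_le_one)
  then show "(norm v)^2 \<le> lambda_max B" by (simp add: power2_norm_eq_inner)
qed

theorem theorem1: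
  fixes E :: "'n::finite \<Rightarrow> 'n \<Rightarrow> bool"
  assumes "\<And>i j. E i j \<Longrightarrow> E j i"
    and "\<And>i. \<not> E i i"
  shows "lovasz_theta E = spherical_indep E
    \<and> ereal (spherical_indep E) = (INF A\<in>{A. weighted_adj E A}. inner_min A)
    \<and> (\<forall>A. weighted_adj E A \<and> A \<noteq> 0 \<longrightarrow>
          (\<exists>x\<in>{1 / lambda_min A .. 1 / lambda_max A}. walk_gen A x = inner_min A))"
proof -
  have si: "spherical_indep E = Inf (SV ` {A. weighted_adj E A})"
  proof -
    have "{SV A | A. weighted_adj E A} = SV ` {A. weighted_adj E A}" by auto
    then show ?thesis unfolding spherical_indep_def SV_def by simp
  qed
  have ne: "SV ` {A. weighted_adj E A} \<noteq> {}" using zero_wadj by blast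
  have bb: "bdd_below (SV ` {A. weighted_adj E A})"
    unfolding bdd_below_def using SV_nonneg by blast
  have th: "lovasz_theta E = Inf {lambda_max B | B. adm E B}" by (rule theta_def')
  have c1a: "lovasz_theta E \<le> spherical_indep E"
    unfolding si by (rule cInf_greatest[OF ne]) (use theta_le_SV in blast)
  have c1b: "spherical_indep E \<le> lovasz_theta E"
    unfolding th
  proof (rule cInf_greatest)
    show "{lambda_max B | B. adm E B} \<noteq> {}" using Jm_adm by blast
    fix t assume "t \<in> {lambda_max B | B. adm E B}"
    then obtain B where B: "adm E B" "t = lambda_max B" by blast
    have "spherical_indep E \<le> SV (B - Jm)"
      unfolding si by (rule cInf_lower) (use wadj_BJ[OF B(1)] bb in auto)
    also have "\<dots> \<le> lambda_max B" by (rule SV_le_lmax[OF B(1)])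
    finally show "spherical_indep E \<le> t" using B by simp
  qed
  have c2: "ereal (spherical_indep E) = (INF A\<in>{A. weighted_adj E A}. inner_min A)"
  proof -
    have "ereal (spherical_indep E) = (INF a\<in>SV ` {A. weighted_adj E A}. ereal a)"
      unfolding si by (rule ereal_Inf'[OF bb ne])
    also have "\<dots> = (INF A\<in>{A. weighted_adj E A}. ereal (SV A))" by (simp add: image_comp)
    also have "\<dots> = (INF A\<in>{A. weighted_adj E A}. inner_min A)"
      by (rule INF_cong[OF refl]) (simp add: inner_min_eq)
    finally show ?thesis .
  qed
  have c3: "\<forall>A. weighted_adj E A \<and> A \<noteq> 0 \<longrightarrow>
          (\<exists>x\<in>{1 / lambda_min A .. 1 / lambda_max A}. walk_gen A x = inner_min A)"
  proof (intro allI impI)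
    fix A assume "weighted_adj E A \<and> A \<noteq> 0"
    then show "\<exists>x\<in>{1 / lambda_min A .. 1 / lambda_max A}. walk_gen A x = inner_min A"
      using perA[of E A] inner_min_eq[of E A] by auto
  qed
  show ?thesis using c1a c1b c2 c3 by simp
qed

end
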